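(* Let $a\in(0,2\pi)$ and $\varepsilon\in(0,1)$. Then $T_0(v,a,\varepsilon)<+\infty$ for all speeds $v>0$ except for a finite number of critical speeds. Moreover: $T_0(v,a,\varepsilon)\sim\frac{\pi-a}{v}$ as $v\to0$; if $v>v_1=\frac{2\pi-a+2\varepsilon}{2\varepsilon}$ then $T_0(v,a,\varepsilon)<\infty$, and $T_0(v,a,\varepsilon)\to\pi-2\varepsilon$ as $v\to+\infty$. Besides, if $v\in\mathbb{Q}$ (with $v>0$), then there exist $a_0>0$ and $\varepsilon_0>0$ such that $T_0(v,a,\varepsilon)=+\infty$ for every $a\in(0,a_0)$ and every $\varepsilon\in(0,\varepsilon_0)$.
   Context: $\Omega=S^2$ is the unit sphere of $\mathbb{R}^3$ with the induced metric, described in spherical coordinates $(\theta,\varphi)$, $\varphi$ the latitude ($\varphi=0$ the equator) and $\theta$ the longitude. For $a\in(0,2\pi)$, $\varepsilon\in(0,\pi/2)$ and $v>0$, set $\omega(t)=\{(\theta,\varphi): |\varphi|<\varepsilon,\ vt<\theta<vt+a\}$ (longitude taken mod $2\pi$) and $Q=\{(t,x)\in\mathbb{R}\times S^2: x\in\omega(t)\}$. Rays are the unit-speed geodesics $t\mapsto x(t)$, $t\in\mathbb{R}$, of $S^2$ (great circles traversed at unit speed). $(Q,T)$ satisfies the time-dependent geometric control condition if every ray $x(\cdot)$ admits $t\in(0,T)$ with $x(t)\in\omega(t)$; the control time is $T_0(v,a,\varepsilon)=\inf\{T>0:(Q,T)\text{ satisfies this condition}\}$, with $T_0=+\infty$ if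 no such $T$ exists. *)

theory Defs
  imports "HOL-Analysis.Analysis"
begin

definition sph :: "real \<Rightarrow> real \<Rightarrow> real^3" where
  "sph th ph = vector [cos ph * cos th, cos ph * sin th, sin ph]"

text \<open>The moving control region omega(t) (longitude taken mod 2 pi, realised by
  allowing any representative th of the longitude).\<close>
definition omega :: "real \<Rightarrow> real \<Rightarrow> real \<Rightarrow> real \<Rightarrow> (real^3) set" where
  "omega v a \<epsilon> t = {sph th ph | th ph. \<bar>ph\<bar> < \<epsilon> \<and> v * t < th \<and> th < v * t + a}"

definition is_ray :: "(real \<Rightarrow> real^3) \<Rightarrow> bool" where
  "is_ray x \<longleftrightarrow> (\<exists>p q. norm p = 1 \<and> norm q = 1 \<and> inner p q = 0 \<and>
                        (\<forall>t. x t = cos t *\<^sub>R p + sin t *\<^sub>R q))"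

definition GCC :: "real \<Rightarrow> real \<Rightarrow> real \<Rightarrow> real \<Rightarrow> bool" where
  "GCC v a \<epsilon> T \<longleftrightarrow> (\<forall>x. is_ray x \<longrightarrow> (\<exists>t. 0 < t \<and> t < T \<and> x t \<in> omega v a \<epsilon> t))"

text \<open>Control time; Inf of the empty set of ereals is +infinity.\<close>
definition T0 :: "real \<Rightarrow> real \<Rightarrow> real \<Rightarrow> ereal" where
  "T0 v a \<epsilon> = Inf {ereal T | T. T > 0 \<and> GCC v a \<epsilon> T}"

end

theory Submission
  imports Defs
begin

lemma sph_comp [simp]: "sph th ph $ 1 = cos ph * cos th" "sph th ph $ 2 = cos ph * sin th" "sph th ph $ 3 = sin ph"
  by (simp_all add: sph_def)

lemma vec3_eq: "(x::real^3) = y \<longleftrightarrow> x$1 = y$1 \<and> x$2 = y$2 \<and> x$3 = y$3"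
proof
  assume "x$1 = y$1 \<and> x$2 = y$2 \<and> x$3 = y$3"
  then show "x = y" unfolding vec_eq_iff using exhaust_3 by metis
qed simp

lemma sph_periodic: "sph (th + 2*pi * of_int m) ph = sph th ph"
  by (simp add: vec3_eq cos_add sin_add)

lemma sph_pi: "sph (th + pi) 0 = - sph th 0"
  by (simp add: vec3_eq)

lemma omegaI:
  assumes "y = sph th ph" "\<bar>ph\<bar> < \<epsilon>" "0 < th + 2*pi * of_int m - v * t" "th + 2*pi * of_int m - v * t < a"
  shows "y \<in> omega v a \<epsilon> t"
  unfolding omega_def using assms sph_periodic[of th m ph]
  by (intro CollectI exI[of _ "th + 2*pi * of_int m"] exI[of _ ph]) auto

lemma inner3: "inner (x::real^3) y = x$1 * y$1 + x$2 * y$2 + x$3 * y$3"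
  by (simp add: inner_vec_def sum_3)

lemma norm3: "norm (x::real^3) = 1 \<longleftrightarrow> (x$1)^2 + (x$2)^2 + (x$3)^2 = 1"
  by (simp add: norm_eq_1 inner3 power2_eq_square)

lemma ray_shift_pi:
  assumes "is_ray x" shows "x (t + pi) = - x t"
  using assms unfolding is_ray_def by auto

lemma ray_node_shift:
  assumes "is_ray x" shows "x (t0 + real k * pi) = (-1)^k *\<^sub>R x t0"
proof (induction k)
  case 0 then show ?case by simp
next
  case (Suc k)
  have "x (t0 + real (Suc k) * pi) = x ((t0 + real k * pi) + pi)" by (simp add: algebra_simps)
  also have "\<dots> = - x (t0 + real k * pi)" using ray_shift_pi[OF assms] .
  finally show ?case using Suc by simp
qed

lemma sph_node_shift: "(-1::real)^k *\<^sub>R sph th 0 = sph (th + real k * pi) 0"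
proof (induction k)
  case 0 then show ?case by simp
next
  case (Suc k)
  have "sph (th + real (Suc k) * pi) 0 = sph ((th + real k * pi) + pi) 0" by (simp add: algebra_simps)
  also have "\<dots> = - sph (th + real k * pi) 0" by (rule sph_pi)
  finally show ?case using Suc[symmetric] by simp
qed

lemma ray_node_exists:
  assumes "is_ray x" obtains t0 where "0 < t0" "t0 \<le> pi" "x t0 $ 3 = 0"
proof -
  obtain p q where pq: "\<forall>t. x t = cos t *\<^sub>R p + sin t *\<^sub>R q" using assms unfolding is_ray_def by auto
  define f where "f t = cos t * p$3 + sin t * q$3" for t
  have fx: "x t $ 3 = f t" for t using pq by (simp add: f_def)
  have cont: "continuous_on {0..pi} f" unfolding f_def by (intro continuous_intros)
  have "\<exists>t\<in>{0..pi}. f t = 0"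
  proof (cases "p$3 \<ge> 0")
    case True
    then show ?thesis using IVT2'[of f pi 0 0] cont by (auto simp: f_def)
  next
    case False
    then show ?thesis using IVT'[of f 0 0 pi] cont by (auto simp: f_def)
  qed
  then obtain t where t: "t \<in> {0..pi}" "f t = 0" by auto
  show ?thesis
  proof (cases "t = 0")
    case True
    then have "f pi = 0" using t by (simp add: f_def)
    then show ?thesis using that[of pi] fx by auto
  next
    case False
    then show ?thesis using that[of t] t fx by auto
  qed
qed

lemma node_form:
  assumes "is_ray x" "x tn $ 3 = 0"
  obtains th c \<sigma> where "c^2 + \<sigma>^2 = 1"
    "\<And>s. \<bar>s\<bar> < pi/2 \<Longrightarrow> x (tn + s) = sph (th + arctan (c * tan s)) (arcsin (\<sigma> * sin s))"
proof -
  obtain p q where pq: "norm p = 1" "norm q = 1" "inner p q = 0" "\<forall>t. x t = cos t *\<^sub>R p + sin t *\<^sub>R q"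
    using assms(1) unfolding is_ray_def by auto
  define w where "w = x tn"
  define u where "u = (- sin tn) *\<^sub>R p + cos tn *\<^sub>R q"
  have xs: "x (tn + s) = cos s *\<^sub>R w + sin s *\<^sub>R u" for s
    unfolding w_def u_def using pq(4) by (simp add: cos_add sin_add algebra_simps)
  have pp: "inner p p = 1" "inner q q = 1" using pq(1,2) by (simp_all add: norm_eq_1)
  have "inner w w = (cos tn)^2 * inner p p + (sin tn)^2 * inner q q + 2 * cos tn * sin tn * inner p q"
    unfolding w_def using pq(4) by (simp add: inner_add_left inner_add_right inner_commute power2_eq_square algebra_simps)
  then have ww: "inner w w = 1" using pp pq(3) by simp
  have "inner u u = (sin tn)^2 * inner p p + (cos tn)^2 * inner q q - 2 * cos tn * sin tn * inner p q"
    unfolding u_def by (simp add: inner_add_left inner_add_right inner_commute power2_eq_square algebra_simps)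
  then have uu: "inner u u = 1" using pp pq(3) by simp
  have "inner w u = - sin tn * cos tn * inner p p + sin tn * cos tn * inner q q + ((cos tn)^2 - (sin tn)^2) * inner p q"
    unfolding w_def u_def using pq(4) by (simp add: inner_add_left inner_add_right inner_commute power2_eq_square algebra_simps)
  then have wu: "inner w u = 0" using pp pq(3) by simp
  have w3: "w$3 = 0" using assms(2) w_def by simp
  have "(w$1)^2 + (w$2)^2 = 1" using ww w3 by (simp add: inner3 power2_eq_square)
  then obtain th where th: "w$1 = cos th" "w$2 = sin th" by (metis sincos_total_2pi)
  define c where "c = u$2 * cos th - u$1 * sin th"
  define \<sigma> where "\<sigma> = u$3"
  have wu': "u$1 * cos th + u$2 * sin th = 0" using wu w3 th by (simp add: inner3 algebra_simps)
  have u1: "u$1 = - c * sin th"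
  proof -
    have "u$1 = u$1 * ((cos th)^2 + (sin th)^2)" by (simp only: sin_cos_squared_add2 mult_1_right)
    also have "\<dots> = cos th * (u$1 * cos th + u$2 * sin th) - sin th * c" unfolding c_def power2_eq_square by algebra
    finally show ?thesis using wu' by simp
  qed
  have u2: "u$2 = c * cos th"
  proof -
    have "u$2 = u$2 * ((cos th)^2 + (sin th)^2)" by (simp only: sin_cos_squared_add2 mult_1_right)
    also have "\<dots> = sin th * (u$1 * cos th + u$2 * sin th) + cos th * c" unfolding c_def power2_eq_square by algebra
    finally show ?thesis using wu' by simp
  qed
  have cs: "c^2 + \<sigma>^2 = 1"
  proof -
    have "1 = (u$1)^2 + (u$2)^2 + (u$3)^2" using uu by (simp add: inner3 power2_eq_square)
    also have "\<dots> = c^2 * ((sin th)^2 + (cos th)^2) + \<sigma>^2" unfolding u1 u2 \<sigma>_def power2_eq_square by algebra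
    finally show ?thesis by simp
  qed
  show ?thesis
  proof (rule that[of c \<sigma> th, OF cs])
    fix s :: real assume s: "\<bar>s\<bar> < pi/2"
    have cpos: "cos s > 0" using s by (intro cos_gt_zero_pi) auto
    have tans: "cos s * tan s = sin s" using cpos by (simp add: tan_def)
    define Q where "Q = sqrt (1 + (c * tan s)^2)"
    have Qpos: "Q > 0" unfolding Q_def by (simp add: add_pos_nonneg)
    have sig1: "\<bar>\<sigma>\<bar> \<le> 1" using cs by (metis abs_le_square_iff abs_one le_add_same_cancel2 one_power2 zero_le_power2)
    have ssin: "\<bar>\<sigma> * sin s\<bar> \<le> 1" using sig1 abs_sin_le_one[of s] by (simp add: abs_mult mult_le_one)
    define ph where "ph = arcsin (\<sigma> * sin s)"
    have sinph: "sin ph = \<sigma> * sin s" unfolding ph_def using ssin by simp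
    have "cos ph = sqrt (1 - (\<sigma> * sin s)^2)" unfolding ph_def using ssin by (intro cos_arcsin) auto
    also have "\<dots> = cos s * Q"
    proof -
      have "1 - (\<sigma> * sin s)^2 = (cos s * Q)^2"
      proof -
        have "(cos s * Q)^2 = (cos s)^2 * (1 + (c * tan s)^2)" unfolding Q_def by (simp add: power_mult_distrib)
        also have "\<dots> = (cos s)^2 + c^2 * (cos s * tan s)^2" by (simp add: power_mult_distrib algebra_simps)
        also have "\<dots> = (cos s)^2 + c^2 * (sin s)^2" using tans by simp
        also have "\<dots> = ((cos s)^2 + (sin s)^2) - (\<sigma> * sin s)^2"
        proof -
          show ?thesis using cs unfolding power2_eq_square by algebra
        qed
        also have "\<dots> = 1 - (\<sigma> * sin s)^2" by simp
        finally show ?thesis by simp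
      qed
      then show ?thesis using cpos Qpos by simp
    qed
    finally have cosph: "cos ph = cos s * Q" .
    define l where "l = arctan (c * tan s)"
    have cl: "cos l = 1 / Q" unfolding l_def Q_def by (simp add: cos_arctan)
    have sl: "sin l = c * tan s / Q" unfolding l_def Q_def by (simp add: sin_arctan)
    have e1: "cos ph * cos l = cos s" using cosph cl Qpos by simp
    have e2: "cos ph * sin l = c * sin s"
    proof -
      have "cos ph * sin l = cos s * (c * tan s)" using cosph sl Qpos by simp
      also have "\<dots> = c * (cos s * tan s)" by simp
      finally show ?thesis using tans by simp
    qed
    show "x (tn + s) = sph (th + arctan (c * tan s)) (arcsin (\<sigma> * sin s))"
      unfolding xs vec3_eq l_def[symmetric] ph_def[symmetric]
    proof (intro conjI)
      have "sph (th + l) ph $ 1 = cos th * (cos ph * cos l) - sin th * (cos ph * sin l)"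
        by (simp add: cos_add algebra_simps)
      then show "(cos s *\<^sub>R w + sin s *\<^sub>R u) $ 1 = sph (th + l) ph $ 1"
        using e1 e2 by (simp add: th u1 algebra_simps)
    next
      have "sph (th + l) ph $ 2 = sin th * (cos ph * cos l) + cos th * (cos ph * sin l)"
        by (simp add: sin_add algebra_simps)
      then show "(cos s *\<^sub>R w + sin s *\<^sub>R u) $ 2 = sph (th + l) ph $ 2"
        using e1 e2 by (simp add: th u2 algebra_simps)
    next
      show "(cos s *\<^sub>R w + sin s *\<^sub>R u) $ 3 = sph (th + l) ph $ 3"
        using sinph w3 by (simp add: \<sigma>_def algebra_simps)
    qed
  qed
qed

lemma abs_sin_eq: "\<bar>x\<bar> \<le> pi/2 \<Longrightarrow> \<bar>sin x\<bar> = sin \<bar>x\<bar>"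
proof (cases "x \<ge> 0")
  case True
  assume "\<bar>x\<bar> \<le> pi/2"
  then have "sin x \<ge> 0" using True by (intro sin_ge_zero) auto
  then show ?thesis using True by simp
next
  case False
  assume "\<bar>x\<bar> \<le> pi/2"
  then have "sin (-x) \<ge> 0" using False by (intro sin_ge_zero) auto
  then show ?thesis using False by simp
qed

lemma arcsin_bound:
  assumes "\<bar>\<sigma>\<bar> \<le> 1" "\<bar>s\<bar> \<le> pi/2"
  shows "\<bar>arcsin (\<sigma> * sin s)\<bar> \<le> \<bar>s\<bar>"
proof -
  have y1: "\<bar>\<sigma> * sin s\<bar> \<le> 1" using assms abs_sin_le_one[of s] by (simp add: abs_mult mult_le_one)
  define ph where "ph = arcsin (\<sigma> * sin s)"
  have php: "-(pi/2) \<le> ph" "ph \<le> pi/2" unfolding ph_def using y1 arcsin_bounded[of "\<sigma> * sin s"] by (auto simp: abs_le_iff)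
  have "sin ph = \<sigma> * sin s" unfolding ph_def using y1 by simp
  then have "\<bar>sin ph\<bar> \<le> \<bar>sin s\<bar>" using assms(1) by (simp add: abs_mult mult_le_cancel_right1 mult_left_le_one_le)
  then have "sin \<bar>ph\<bar> \<le> sin \<bar>s\<bar>" using abs_sin_eq[of ph] abs_sin_eq[of s] php assms(2) by simp
  then show ?thesis unfolding ph_def[symmetric] using php assms(2) by (subst (asm) sin_mono_le_eq) auto
qed

lemma arctan_bound:
  assumes "\<bar>c\<bar> \<le> 1" "\<bar>s\<bar> < pi/2"
  shows "\<bar>arctan (c * tan s)\<bar> \<le> \<bar>s\<bar>"
proof -
  have "\<bar>arctan (c * tan s)\<bar> = arctan \<bar>c * tan s\<bar>"
    by (cases "c * tan s \<ge> 0") (auto simp: arctan_minus[symmetric] arctan_le_zero_iff)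
  also have "\<dots> \<le> arctan \<bar>tan s\<bar>" using assms(1) by (intro arctan_monotone') (simp add: abs_mult mult_left_le_one_le)
  also have "\<bar>tan s\<bar> = tan \<bar>s\<bar>"
  proof (cases "s \<ge> 0")
    case True
    then have "tan s \<ge> 0" using assms(2) by (intro tan_pos_pi2_le) auto  
    then show ?thesis using True by simp
  next
    case False
    then have "tan (-s) \<ge> 0" using assms(2) by (intro tan_pos_pi2_le) auto
    then show ?thesis using False by simp
  qed
  also have "arctan (tan \<bar>s\<bar>) = \<bar>s\<bar>" using assms(2) by (intro arctan_tan) auto
  finally show ?thesis .
qed

lemma normalize_2pi: "\<exists>m::int. 0 < y + 2*pi * of_int m \<and> y + 2*pi * of_int m \<le> 2*pi"
proof -
  define k where "k = \<lceil>y / (2*pi)\<rceil>"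
  have k: "of_int k - 1 < y / (2*pi)" "y / (2*pi) \<le> of_int k" using ceiling_correct[of "y/(2*pi)"] k_def by auto
  have "of_int k * (2*pi) - 2*pi < y" "y \<le> of_int k * (2*pi)"
    using k by (simp_all add: field_simps)
  then show ?thesis by (intro exI[of _ "1 - k"]) (simp add: algebra_simps)
qed

lemma node_point_in:
  assumes "x t = sph (th + arctan (c * tan s)) (arcsin (\<sigma> * sin s))" "\<bar>\<sigma>\<bar> \<le> 1" "\<bar>s\<bar> < \<epsilon>" "\<epsilon> \<le> pi/2"
    "0 < th + arctan (c * tan s) + 2*pi * of_int m - v * t" "th + arctan (c * tan s) + 2*pi * of_int m - v * t < a"
  shows "x t \<in> omega v a \<epsilon> t"
proof (rule omegaI[OF assms(1)])
  show "\<bar>arcsin (\<sigma> * sin s)\<bar> < \<epsilon>" using arcsin_bound[OF assms(2), of s] assms(3,4) by linarith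
qed (use assms in auto)

lemma window_hit:
  assumes ray: "is_ray x" and node: "x tn $ 3 = 0" and ep: "0 < \<epsilon>" "\<epsilon> \<le> 1"
    and s: "-\<epsilon> < s1" "s1 \<le> s2" "s2 < \<epsilon>" "0 < tn + s1" "tn + s2 < T"
    and a0: "0 < a"
    and D: "\<And>c. \<bar>c\<bar> \<le> 1 \<Longrightarrow> v * (s2 - s1) - (arctan (c * tan s2) - arctan (c * tan s1)) > 2*pi - a"
  shows "\<exists>t. 0 < t \<and> t < T \<and> x t \<in> omega v a \<epsilon> t"
proof -
  have pi2: "\<epsilon> < pi/2" using ep pi_gt3 by linarith
  obtain th c \<sigma> where cs: "c^2 + \<sigma>^2 = 1"
    and xf: "\<And>s. \<bar>s\<bar> < pi/2 \<Longrightarrow> x (tn + s) = sph (th + arctan (c * tan s)) (arcsin (\<sigma> * sin s))"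
    using node_form[OF ray node] by metis
  have c1: "\<bar>c\<bar> \<le> 1" using cs by (metis abs_le_square_iff abs_one le_add_same_cancel1 one_power2 zero_le_power2)
  have sg1: "\<bar>\<sigma>\<bar> \<le> 1" using cs by (metis abs_le_square_iff abs_one le_add_same_cancel2 one_power2 zero_le_power2)
  define g where "g s = th + arctan (c * tan s) - v * (tn + s)" for s
  obtain m :: int where m: "0 < g s1 + 2*pi * of_int m" "g s1 + 2*pi * of_int m \<le> 2*pi"
    using normalize_2pi by blast
  define f where "f s = g s + 2*pi * of_int m" for s
  have hit: "x (tn + s) \<in> omega v a \<epsilon> (tn + s)" if "s1 \<le> s" "s \<le> s2" "0 < f s" "f s < a" for s
  proof (rule node_point_in[where x=x and t="tn+s" and s=s and th=th and c=c and \<sigma>=\<sigma> and m=m])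
    show "x (tn + s) = sph (th + arctan (c * tan s)) (arcsin (\<sigma> * sin s))" using xf that s pi2 by auto
    show "\<bar>\<sigma>\<bar> \<le> 1" by (rule sg1)
    show "\<bar>s\<bar> < \<epsilon>" using that s pi2 by auto
    show "\<epsilon> \<le> pi/2" using pi2 by simp
    show "0 < th + arctan (c * tan s) + 2*pi * of_int m - v * (tn + s)"
         "th + arctan (c * tan s) + 2*pi * of_int m - v * (tn + s) < a"
      using that(3,4) unfolding f_def g_def by (simp_all add: algebra_simps)
  qed
  show ?thesis
  proof (cases "f s1 < a")
    case True
    then show ?thesis using hit[of s1] m s unfolding f_def by (intro exI[of _ "tn + s1"]) auto
  next
    case False
    have "f s1 - f s2 = v * (s2 - s1) - (arctan (c * tan s2) - arctan (c * tan s1))"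
      unfolding f_def g_def by (simp add: algebra_simps)
    then have fs2: "f s2 < a" using D[OF c1] m unfolding f_def by linarith
    define \<tau> where "\<tau> = (max (f s2) 0 + a) / 2"
    have tau: "f s2 \<le> \<tau>" "\<tau> \<le> f s1" "0 < \<tau>" "\<tau> < a" using False fs2 a0 unfolding \<tau>_def by auto
    have cos_nz: "cos s \<noteq> 0" if "s \<in> {s1..s2}" for s
      using that s pi2 cos_gt_zero_pi[of s] by auto
    have cont: "continuous_on {s1..s2} f"
      unfolding f_def g_def by (intro continuous_intros) (use cos_nz in auto)
    obtain s0 where s0: "s1 \<le> s0" "s0 \<le> s2" "f s0 = \<tau>"
      using IVT2'[of f s2 \<tau> s1, OF tau(1,2) s(2) cont] by auto
    show ?thesis using hit[of s0] s0 tau s by (intro exI[of _ "tn + s0"]) auto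
  qed
qed

lemma node_seq:
  assumes "is_ray x" "x t0 $ 3 = 0"
  obtains th where "\<And>k::nat. x (t0 + real k * pi) = sph (th + real k * pi) 0"
proof -
  obtain th c \<sigma> where "\<And>s. \<bar>s\<bar> < pi/2 \<Longrightarrow> x (t0 + s) = sph (th + arctan (c * tan s)) (arcsin (\<sigma> * sin s))"
    using node_form[OF assms] by metis
  from this[of 0] have x0: "x t0 = sph th 0" by simp
  show ?thesis
    by (rule that[of th]) (simp add: ray_node_shift[OF assms(1)] x0 sph_node_shift)
qed

lemma gcc_from_arith:
  assumes ep: "0 < \<epsilon>" and T: "T > pi + K"
    and A: "\<And>C. \<exists>k::nat. real k * pi \<le> K \<and> (\<exists>m::int. 0 < C + real k * pi * (1 - v) + 2*pi * of_int m
                 \<and> C + real k * pi * (1 - v) + 2*pi * of_int m < a)"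
  shows "GCC v a \<epsilon> T"
  unfolding GCC_def
proof (intro allI impI)
  fix x assume ray: "is_ray x"
  obtain t0 where t0: "0 < t0" "t0 \<le> pi" "x t0 $ 3 = 0" using ray_node_exists[OF ray] by metis
  obtain th where xs: "\<And>k::nat. x (t0 + real k * pi) = sph (th + real k * pi) 0"
    using node_seq[OF ray t0(3)] by metis
  obtain k :: nat and m :: int where k: "real k * pi \<le> K"
    "0 < (th - v * t0) + real k * pi * (1 - v) + 2*pi * of_int m"
    "(th - v * t0) + real k * pi * (1 - v) + 2*pi * of_int m < a"
    using A[of "th - v * t0"] by metis
  have "x (t0 + real k * pi) \<in> omega v a \<epsilon> (t0 + real k * pi)"
    by (rule omegaI[OF xs[of k], where m=m]) (use k ep in \<open>auto simp: algebra_simps\<close>)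
  moreover have "0 < t0 + real k * pi" using t0(1) by (simp add: add_pos_nonneg)
  moreover have "t0 + real k * pi < T" using t0 k T by linarith
  ultimately show "\<exists>t>0. t < T \<and> x t \<in> omega v a \<epsilon> t" by blast
qed

lemma discrete_ivt:
  fixes F :: "nat \<Rightarrow> real"
  assumes "F 0 \<le> 0" "0 < F n"
  shows "\<exists>j<n. F j \<le> 0 \<and> 0 < F (Suc j)"
  using assms(2)
proof (induction n)
  case 0 then show ?case using assms(1) by simp
next
  case (Suc n)
  show ?case
  proof (cases "F n \<le> 0")
    case True then show ?thesis using Suc by auto
  next
    case False
    then obtain j where "j < n" "F j \<le> 0" "0 < F (Suc j)" using Suc.IH by auto
    then show ?thesis by (intro exI[of _ j]) auto
  qed
qed

lemma sweep_pos:
  assumes "0 < \<eta>" "\<eta> < a"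
  shows "\<exists>j::nat. j \<le> nat \<lceil>2*pi/\<eta>\<rceil> + 1 \<and> (\<exists>m::int. 0 < C + real j * \<eta> + 2*pi * of_int m \<and> C + real j * \<eta> + 2*pi * of_int m < a)"
proof -
  obtain m :: int where m: "0 < C + 2*pi * of_int m" "C + 2*pi * of_int m \<le> 2*pi" using normalize_2pi by blast
  define z where "z = C + 2*pi * of_int (m - 1)"
  have z: "-2*pi < z" "z \<le> 0" using m unfolding z_def by (simp_all add: algebra_simps)
  define J where "J = nat \<lceil>2*pi/\<eta>\<rceil> + 1"
  have "2*pi/\<eta> \<le> real (nat \<lceil>2*pi/\<eta>\<rceil>)" by linarith
  then have "(2*pi/\<eta>) * \<eta> \<le> real (nat \<lceil>2*pi/\<eta>\<rceil>) * \<eta>" using assms by (intro mult_right_mono) auto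
  then have "2*pi \<le> real (nat \<lceil>2*pi/\<eta>\<rceil>) * \<eta>" using assms by simp
  then have "2*pi < real J * \<eta>" unfolding J_def using assms by (simp add: algebra_simps)
  then have "0 < z + real J * \<eta>" using z by linarith
  then obtain j where j: "j < J" "z + real j * \<eta> \<le> 0" "0 < z + real (Suc j) * \<eta>"
    using discrete_ivt[of "\<lambda>j. z + real j * \<eta>" J] z by auto
  have "z + real (Suc j) * \<eta> < a" using j(2) assms by (simp add: algebra_simps)
  then show ?thesis using j unfolding J_def z_def
    by (intro exI[of _ "Suc j"] conjI exI[of _ "m - 1"]) (auto simp: algebra_simps)
qed

lemma sweep:
  assumes "\<eta> \<noteq> 0" "\<bar>\<eta>\<bar> < a"
  shows "\<exists>j::nat. j \<le> nat \<lceil>2*pi/\<bar>\<eta>\<bar>\<rceil> + 1 \<and> (\<exists>m::int. 0 < C + real j * \<eta> + 2*pi * of_int m \<and> C + real j * \<eta> + 2*pi * of_int m < a)"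
proof (cases "\<eta> > 0")
  case True then show ?thesis using sweep_pos[of \<eta> a C] assms by simp
next
  case False
  then have "0 < -\<eta>" "-\<eta> < a" using assms by auto
  from sweep_pos[OF this, of "a - C"] obtain j :: nat and m :: int where
    "j \<le> nat \<lceil>2*pi/(-\<eta>)\<rceil> + 1" "0 < a - C + real j * (-\<eta>) + 2*pi * of_int m"
    "a - C + real j * (-\<eta>) + 2*pi * of_int m < a" by blast
  then show ?thesis using False
    by (intro exI[of _ j] conjI exI[of _ "-m"]) (auto simp: algebra_simps)
qed

lemma stepdown:
  assumes "0 < h" "h < a" "0 < y"
  shows "\<exists>j::nat. 0 < y - real j * h \<and> y - real j * h < a \<and> real j * h \<le> max 0 (y - a) + h"
proof (cases "y < a")
  case True then show ?thesis using assms by (intro exI[of _ 0]) auto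
next
  case False
  define f where "f = \<lfloor>(y - a) / h\<rfloor>"
  have f0: "0 \<le> f" unfolding f_def using False assms by simp
  have f1: "real_of_int f \<le> (y - a)/h" "(y - a)/h < real_of_int f + 1" unfolding f_def by linarith+
  have f2: "real_of_int f * h \<le> y - a" "y - a < (real_of_int f + 1) * h"
    using f1 assms by (simp_all add: field_simps)
  define j where "j = nat f + 1"
  have jr: "real j = real_of_int f + 1" unfolding j_def using f0 by simp
  show ?thesis using f2 assms False by (intro exI[of _ j]) (auto simp: jr algebra_simps)
qed

lemma arith_small_v:
  assumes v: "0 < v" "2 * pi * v < a" and a: "a < pi"
  shows "\<exists>k::nat. real k * pi \<le> (pi - a)/v + 4*pi \<and> (\<exists>m::int. 0 < C + real k * pi * (1 - v) + 2*pi * of_int m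
                 \<and> C + real k * pi * (1 - v) + 2*pi * of_int m < a)"
proof -
  define h where "h = 2 * pi * v"
  have h: "0 < h" "h < a" using v unfolding h_def by auto
  obtain me :: int where me: "0 < C + 2*pi * of_int me" "C + 2*pi * of_int me \<le> 2*pi" using normalize_2pi by blast
  define y where "y = C + 2*pi * of_int me"
  show ?thesis
  proof (cases "y \<le> pi + pi * v")
    case True
    obtain j :: nat where j: "0 < y - real j * h" "y - real j * h < a" "real j * h \<le> max 0 (y - a) + h"
      using stepdown[OF h, of y] me y_def by auto
    have pv: "0 < pi * v" using v by simp
    have "max 0 (y - a) \<le> (pi - a) + pi * v" using True a pv by simp
    then have "real j * h \<le> (pi - a) + pi * v + h" using j(3) by linarith
    then have "real j * (2*pi) \<le> ((pi - a) + 3 * pi * v) / v" using v unfolding h_def by (simp add: field_simps)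
    also have "\<dots> = (pi - a) / v + 3 * pi" using v by (simp add: field_simps)
    finally have jb0: "real j * (2*pi) \<le> (pi - a)/v + 3*pi" .
    have "real (2*j) * pi = real j * (2*pi)" by simp
    then have jb: "real (2*j) * pi \<le> (pi - a)/v + 4*pi" using jb0 pi_gt_zero by linarith
    have eq: "C + real (2*j) * pi * (1 - v) + 2*pi * of_int (me - int j) = y - real j * h"
      unfolding y_def h_def by (simp add: algebra_simps)
    show ?thesis using jb j eq by (intro exI[of _ "2*j"] conjI exI[of _ "me - int j"]) auto
  next
    case False
    define z where "z = y - pi - pi * v"
    have z0: "0 < z" using False z_def by simp
    have "0 < pi * v" using v by simp
    then have zb: "z \<le> pi" using me y_def z_def by linarith
    obtain j :: nat where j: "0 < z - real j * h" "z - real j * h < a" "real j * h \<le> max 0 (z - a) + h"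
      using stepdown[OF h z0] by auto
    have "real j * h \<le> (pi - a) + h" using j(3) zb a by linarith
    then have "real j * (2*pi) \<le> ((pi - a) + 2 * pi * v) / v" using v unfolding h_def by (simp add: field_simps)
    also have "\<dots> = (pi - a) / v + 2 * pi" using v by (simp add: field_simps)
    finally have jb0: "real j * (2*pi) \<le> (pi - a)/v + 2*pi" .
    have "real (2*j+1) * pi = real j * (2*pi) + pi" by (simp add: algebra_simps)
    then have jb: "real (2*j+1) * pi \<le> (pi - a)/v + 4*pi" using jb0 pi_gt_zero by linarith
    have eq: "C + real (2*j+1) * pi * (1 - v) + 2*pi * of_int (me - int j - 1) = z - real j * h"
      unfolding z_def y_def h_def by (simp add: algebra_simps)
    show ?thesis using jb j eq by (intro exI[of _ "2*j+1"] conjI exI[of _ "me - int j - 1"]) auto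
  qed
qed

lemma T0_le: "T > 0 \<Longrightarrow> GCC v a \<epsilon> T \<Longrightarrow> T0 v a \<epsilon> \<le> ereal T"
  unfolding T0_def by (rule Inf_lower) auto

lemma T0_ge: "(\<And>T. T > 0 \<Longrightarrow> GCC v a \<epsilon> T \<Longrightarrow> L \<le> T) \<Longrightarrow> ereal L \<le> T0 v a \<epsilon>"
  unfolding T0_def by (rule Inf_greatest) auto

lemma T0_inf: "(\<And>T. T > 0 \<Longrightarrow> \<not> GCC v a \<epsilon> T) \<Longrightarrow> T0 v a \<epsilon> = \<infinity>"
proof -
  assume "\<And>T. T > 0 \<Longrightarrow> \<not> GCC v a \<epsilon> T"
  then have "{ereal T | T. T > 0 \<and> GCC v a \<epsilon> T} = {}" by auto
  moreover have "Inf {} = (\<infinity>::ereal)" by (simp add: top_ereal_def)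
  ultimately show ?thesis unfolding T0_def by metis
qed

definition merid :: "real \<Rightarrow> real \<Rightarrow> real^3" where
  "merid \<alpha> t = cos t *\<^sub>R vector [cos \<alpha>, sin \<alpha>, 0] + sin t *\<^sub>R vector [0, 0, 1]"

lemma merid_ray: "is_ray (merid \<alpha>)"
  unfolding is_ray_def merid_def
  by (intro exI[of _ "vector [cos \<alpha>, sin \<alpha>, 0]"] exI[of _ "vector [0, 0, 1]"])
     (simp add: norm3 inner3)

lemma merid_in:
  assumes "merid \<alpha> t \<in> omega v a \<epsilon> t" "\<epsilon> \<le> pi/2"
  obtains k :: int where "v * t < \<alpha> + of_int k * pi" "\<alpha> + of_int k * pi < v * t + a" "\<bar>sin t\<bar> < sin \<epsilon>"
proof -
  obtain th ph where tp: "merid \<alpha> t = sph th ph" "\<bar>ph\<bar> < \<epsilon>" "v * t < th" "th < v * t + a"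
    using assms(1) unfolding omega_def by auto
  have c: "cos ph * cos th = cos t * cos \<alpha>" "cos ph * sin th = cos t * sin \<alpha>" "sin ph = sin t"
    using tp(1) unfolding vec3_eq merid_def by simp_all
  have cp: "cos ph > 0" using tp(2) assms(2) by (intro cos_gt_zero_pi) auto
  have "cos ph * sin (th - \<alpha>) = (cos ph * sin th) * cos \<alpha> - (cos ph * cos th) * sin \<alpha>"
    by (simp add: sin_diff algebra_simps)
  also have "\<dots> = 0" using c by simp
  finally have "sin (th - \<alpha>) = 0" using cp by simp
  then obtain k :: int where k: "th - \<alpha> = of_int k * pi" using sin_zero_iff_int2 by metis
  have "\<bar>sin t\<bar> = sin \<bar>ph\<bar>" using c(3) abs_sin_eq[of ph] tp(2) assms(2) by simp
  also have "\<dots> < sin \<epsilon>" using tp(2) assms(2) by (subst sin_mono_less_eq) auto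
  finally show ?thesis using that[of k] tp k by (simp add: algebra_simps)
qed

lemma lower_small_v:
  assumes "0 < v" "a < pi" "0 < a" "0 < \<epsilon>" "\<epsilon> < 1" "GCC v a \<epsilon> T"
  shows "(pi - a) / v \<le> T"
proof (rule ccontr)
  assume "\<not> (pi - a) / v \<le> T"
  then have T: "T < (pi - a) / v" by simp
  obtain t where t: "0 < t" "t < T" "merid 0 t \<in> omega v a \<epsilon> t"
    using assms(6) merid_ray[of 0] unfolding GCC_def by blast
  have e2: "\<epsilon> \<le> pi/2" using assms pi_gt3 by linarith
  obtain k :: int where k: "v * t < of_int k * pi" "of_int k * pi < v * t + a"
    using merid_in[OF t(3) e2] by auto
  have "v * t < v * T" using t assms(1) by simp
  moreover have "v * T < pi - a" using T assms(1) by (simp add: field_simps)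
  ultimately have "v * t < pi - a" by linarith
  moreover have "0 < v * t" using assms(1) t(1) by simp
  ultimately have "of_int k * pi < 1 * pi" "0 * pi < of_int k * pi" using k by linarith+
  then have "of_int k < (1::real)" "(0::real) < of_int k"
    using mult_less_cancel_right_pos[OF pi_gt_zero] by blast+
  then show False by simp
qed

definition tilt :: "real \<Rightarrow> real \<Rightarrow> real^3" where
  "tilt \<epsilon> t = cos t *\<^sub>R vector [cos \<epsilon>, 0, sin \<epsilon>] + sin t *\<^sub>R vector [- sin \<epsilon>, 0, cos \<epsilon>]"

lemma tilt_ray: "is_ray (tilt \<epsilon>)"
  unfolding is_ray_def tilt_def
  by (intro exI[of _ "vector [cos \<epsilon>, 0, sin \<epsilon>]"] exI[of _ "vector [- sin \<epsilon>, 0, cos \<epsilon>]"])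
     (simp add: norm3 inner3 algebra_simps)

lemma lower_top:
  assumes "0 < \<epsilon>" "\<epsilon> < 1" "GCC v a \<epsilon> T"
  shows "pi - 2 * \<epsilon> \<le> T"
proof (rule ccontr)
  assume "\<not> pi - 2 * \<epsilon> \<le> T"
  then have T: "T < pi - 2 * \<epsilon>" by simp
  obtain t where t: "0 < t" "t < T" "tilt \<epsilon> t \<in> omega v a \<epsilon> t"
    using assms(3) tilt_ray[of \<epsilon>] unfolding GCC_def by blast
  obtain th ph where tp: "tilt \<epsilon> t = sph th ph" "\<bar>ph\<bar> < \<epsilon>"
    using t(3) unfolding omega_def by auto
  have "sin ph = cos t * sin \<epsilon> + sin t * cos \<epsilon>"
    using tp(1) unfolding vec3_eq tilt_def by simp
  then have sph: "sin ph = sin (t + \<epsilon>)" by (simp add: sin_add algebra_simps)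
  have e2: "\<epsilon> < pi/2" using assms pi_gt3 by linarith
  have "sin ph < sin \<epsilon>" using tp(2) e2 by (subst sin_mono_less_eq) auto
  moreover have "sin (t + \<epsilon>) - sin \<epsilon> > 0"
  proof -
    have "sin (t + \<epsilon>) - sin \<epsilon> = 2 * sin (t/2) * cos ((t + 2*\<epsilon>)/2)"
      by (simp add: sin_diff_sin algebra_simps)
    moreover have "sin (t/2) > 0" using t T assms by (intro sin_gt_zero) auto
    moreover have "cos ((t + 2*\<epsilon>)/2) > 0" using t T assms by (intro cos_gt_zero_pi) auto
    ultimately show ?thesis by simp
  qed
  ultimately show False using sph by simp
qed

lemma rat_avoid:
  fixes P Q :: int and k :: int
  assumes PQ: "0 < P" "0 < Q" "v = of_int P / of_int Q"
    and e: "0 < \<epsilon>" "\<epsilon> < pi / (4 * of_int P)" and a: "0 < a" "a < pi / (4 * of_int Q)"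
    and h: "v * t < pi / (2 * of_int Q) + of_int k * pi" "pi / (2 * of_int Q) + of_int k * pi < v * t + a"
    "\<bar>sin t\<bar> < sin \<epsilon>"
  shows False
proof -
  define j where "j = \<lfloor>t / pi + 1/2\<rfloor>"
  define r where "r = t - of_int j * pi"
  have "of_int j \<le> t/pi + 1/2" "t/pi + 1/2 < of_int j + 1" unfolding j_def by linarith+
  then have "of_int j * pi \<le> t + pi/2" "t + pi/2 < of_int j * pi + pi"
    by (simp_all add: field_simps)
  then have r: "-(pi/2) \<le> r" "r < pi/2" unfolding r_def by simp_all
  have "sin t = sin (r + pi * of_int j)" unfolding r_def by (simp add: algebra_simps)
  also have "\<dots> = sin r * cos (pi * of_int j)" by (simp add: sin_add)
  finally have "\<bar>sin t\<bar> = \<bar>sin r\<bar>" by (simp add: abs_mult)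
  also have "\<dots> = sin \<bar>r\<bar>" using r by (intro abs_sin_eq) auto
  finally have "sin \<bar>r\<bar> < sin \<epsilon>" using h(3) by simp
  moreover have "\<epsilon> \<le> pi/2" using e PQ
    by (smt (verit, ccfv_SIG) divide_le_eq_1_pos divide_less_0_iff field_sum_of_halves frac_less2 less_divide_eq_1_pos mult_less_cancel_left_pos of_int_less_1_iff pi_gt_zero times_divide_eq_right)
  ultimately have rl: "\<bar>r\<bar> < \<epsilon>" using r e(1) by (subst (asm) sin_mono_less_eq) auto
  define X where "X = of_int P * r / pi"
  have "of_int P * \<bar>r\<bar> < of_int P * \<epsilon>" using rl PQ by simp
  moreover have "of_int P * \<epsilon> < pi/4" using e(2) PQ by (simp add: field_simps)
  ultimately have "of_int P * \<bar>r\<bar> < pi / 4" by linarith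
  then have X: "\<bar>X\<bar> < 1/4" unfolding X_def using PQ by (simp add: abs_mult field_simps)
  have QA: "of_int Q * a / pi < 1/4" using a PQ by (simp add: field_simps)
  have vt: "v * t = (of_int P * of_int j * pi + of_int P * r) / of_int Q" unfolding PQ(3) r_def using PQ by (simp add: field_simps)
  define n where "n = Q * k - P * j"
  have qv: "of_int Q * (v * t) = of_int P * of_int j * pi + of_int P * r" using vt PQ by simp
  have qa: "of_int Q * (pi / (2 * of_int Q) + of_int k * pi) = pi / 2 + of_int Q * of_int k * pi"
    using PQ by (simp add: field_simps)
  have "of_int Q * (v * t) < of_int Q * (pi / (2 * of_int Q) + of_int k * pi)"
    using mult_strict_left_mono[OF h(1), of "of_int Q"] PQ by simp
  then have "(of_int P * of_int j * pi + of_int P * r) / pi < (pi / 2 + of_int Q * of_int k * pi) / pi"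
    unfolding qv qa by (intro divide_strict_right_mono) auto
  moreover have d1: "(of_int P * of_int j * pi + of_int P * r) / pi = of_int P * of_int j + X"
    unfolding X_def by (simp add: field_simps)
  moreover have d2: "(pi / 2 + of_int Q * of_int k * pi) / pi = 1/2 + of_int Q * of_int k"
    by (simp add: field_simps)
  ultimately have "of_int P * of_int j + X < 1/2 + of_int Q * of_int k" by simp
  then have n1: "X < 1/2 + of_int n" unfolding n_def by simp
  have "of_int Q * (pi / (2 * of_int Q) + of_int k * pi) < of_int Q * (v * t + a)"
    using mult_strict_left_mono[OF h(2), of "of_int Q"] PQ by simp
  have "(pi / 2 + of_int Q * of_int k * pi) / pi < ((of_int P * of_int j * pi + of_int P * r) + of_int Q * a) / pi"
  proof -
    have "of_int Q * (v * t + a) = (of_int P * of_int j * pi + of_int P * r) + of_int Q * a"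
      using qv by (simp add: distrib_left)
    then have "pi / 2 + of_int Q * of_int k * pi < (of_int P * of_int j * pi + of_int P * r) + of_int Q * a"
      using \<open>of_int Q * (pi / (2 * of_int Q) + of_int k * pi) < of_int Q * (v * t + a)\<close> qa by simp
    then show ?thesis by (intro divide_strict_right_mono) auto
  qed
  moreover have "((of_int P * of_int j * pi + of_int P * r) + of_int Q * a) / pi = of_int P * of_int j + X + of_int Q * a / pi"
    unfolding X_def by (simp add: field_simps)
  ultimately have "1/2 + of_int Q * of_int k < of_int P * of_int j + X + of_int Q * a / pi" using d2 by simp
  then have n2: "1/2 + of_int n < X + of_int Q * a / pi" unfolding n_def by simp
  have "-1 < n" using n1 X by linarith
  moreover have "n < 0" using n2 X QA by linarith
  ultimately show False by simp
qed

lemma claim_rat: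
  assumes "v \<in> \<rat>" "v > 0"
  shows "\<exists>a0 > 0. \<exists>\<epsilon>0 > 0. \<forall>a' \<epsilon>'. 0 < a' \<and> a' < a0 \<and> 0 < \<epsilon>' \<and> \<epsilon>' < \<epsilon>0 \<longrightarrow> T0 v a' \<epsilon>' = \<infinity>"
proof -
  obtain P Q :: int where Q: "Q > 0" and v: "v = of_int P / of_int Q" using Rats_cases'[OF assms(1)] by metis
  have P: "P > 0" using assms(2) Q v by (simp add: zero_less_divide_iff)
  define a0 where "a0 = pi / (4 * of_int Q)"
  define e0 where "e0 = min 1 (pi / (4 * of_int P))"
  have "a0 > 0" "e0 > 0" unfolding a0_def e0_def using P Q by auto
  moreover have "T0 v a' \<epsilon>' = \<infinity>" if h: "0 < a'" "a' < a0" "0 < \<epsilon>'" "\<epsilon>' < e0" for a' \<epsilon>'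
  proof (rule T0_inf)
    fix T :: real assume "T > 0"
    show "\<not> GCC v a' \<epsilon>' T"
    proof
    assume "GCC v a' \<epsilon>' T"
    then obtain t where t: "0 < t" "t < T" "merid (pi / (2 * of_int Q)) t \<in> omega v a' \<epsilon>' t"
      using merid_ray unfolding GCC_def by blast
    have e2: "\<epsilon>' \<le> pi/2" using h(4) pi_gt3 unfolding e0_def by linarith
    obtain k :: int where k: "v * t < pi / (2 * of_int Q) + of_int k * pi" "pi / (2 * of_int Q) + of_int k * pi < v * t + a'"
      "\<bar>sin t\<bar> < sin \<epsilon>'"
      using merid_in[OF t(3) e2] by metis
    show False
      by (rule rat_avoid[OF P Q v h(3) _ h(1) _ k]) (use h in \<open>auto simp: a0_def e0_def\<close>)
    qed
  qed
  ultimately show ?thesis by blast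
qed

lemma gcc_large:
  assumes a: "0 < a" "a < 2*pi" and e: "0 < \<epsilon>" "\<epsilon> < 1" and v: "v > (2*pi - a + 2*\<epsilon>) / (2*\<epsilon>)"
  shows "GCC v a \<epsilon> (2*pi + 2)"
  unfolding GCC_def
proof (intro allI impI)
  fix x assume ray: "is_ray x"
  obtain t0 where t0: "0 < t0" "t0 \<le> pi" "x t0 $ 3 = 0" using ray_node_exists[OF ray] by metis
  have node: "x (t0 + pi) $ 3 = 0" using ray_shift_pi[OF ray, of t0] t0(3) by simp
  have v2: "2 * \<epsilon> * v > 2*pi - a + 2*\<epsilon>" using v e by (simp add: pos_divide_less_eq mult.commute)
  then have "2 * \<epsilon> * v > 2 * \<epsilon> * 1" using a by linarith
  then have v1: "v > 1" using e by (simp add: mult_less_cancel_left_pos)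
  define q where "q = (2*pi - a) / (2*(v - 1))"
  define e' where "e' = (\<epsilon> + q) / 2"
  have q: "q < \<epsilon>" unfolding q_def using v1 v2 by (simp add: pos_divide_less_eq algebra_simps)
  have q0: "0 < q" unfolding q_def using v1 a by simp
  have e': "0 < e'" "e' < \<epsilon>" "q < e'" unfolding e'_def using q q0 by auto
  have De: "2*pi - a < 2 * e' * (v - 1)" using e'(3) v1 unfolding q_def by (simp add: pos_divide_less_eq algebra_simps)
  have "\<exists>t. 0 < t \<and> t < 2*pi + 2 \<and> x t \<in> omega v a \<epsilon> t"
  proof (rule window_hit[OF ray node e(1) _ _ _ _ _ _ a(1)])
    show "- \<epsilon> < - e'" "- e' \<le> e'" "e' < \<epsilon>" "\<epsilon> \<le> 1" using e' e by auto
    show "0 < t0 + pi + - e'" using e' e t0 pi_gt3 by linarith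
    show "t0 + pi + e' < 2 * pi + 2" using e' e t0 by linarith
    fix c :: real assume c: "\<bar>c\<bar> \<le> 1"
    have "e' < pi/2" using e' e pi_gt3 by linarith
    then have b1: "\<bar>arctan (c * tan e')\<bar> \<le> e'" "\<bar>arctan (c * tan (- e'))\<bar> \<le> e'"
      using arctan_bound[OF c, of e'] arctan_bound[OF c, of "-e'"] e' by auto
    have "v * (e' - - e') - (arctan (c * tan e') - arctan (c * tan (- e'))) \<ge> 2 * e' * (v - 1)"
      using b1 by (simp add: algebra_simps abs_le_iff)
    then show "2 * pi - a < v * (e' - - e') - (arctan (c * tan e') - arctan (c * tan (- e')))"
      using De by linarith
  qed
  then show "\<exists>t>0. t < 2*pi + 2 \<and> x t \<in> omega v a \<epsilon> t" by blast
qed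

lemma minmax: "a - c \<ge> z \<Longrightarrow> a - d \<ge> z \<Longrightarrow> b - c \<ge> z \<Longrightarrow> b - d \<ge> z \<Longrightarrow> min a b - max c d \<ge> (z::real)"
  by (simp add: min_def max_def)

lemma gcc_top:
  assumes a: "0 < a" and e: "0 < \<epsilon>" "\<epsilon> < 1" and d: "0 < \<delta>" "\<delta> \<le> \<epsilon>" and v: "12 * pi / \<delta> \<le> v"
  shows "GCC v a \<epsilon> (pi - 2*\<epsilon> + \<delta>)"
  unfolding GCC_def
proof (intro allI impI)
  fix x assume ray: "is_ray x"
  define T where "T = pi - 2*\<epsilon> + \<delta>"
  obtain t0 where t0: "0 < t0" "t0 \<le> pi" "x t0 $ 3 = 0" using ray_node_exists[OF ray] by metis
  obtain tn where tn: "x tn $ 3 = 0" "\<delta>/2 - \<epsilon> \<le> tn" "tn < pi - \<epsilon> + \<delta>/2"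
  proof (cases "t0 < pi - \<epsilon> + \<delta>/2")
    case True
    then show ?thesis using that[of t0] t0 d by auto
  next
    case False
    have "x (t0 - pi) $ 3 = 0" using ray_shift_pi[OF ray, of "t0 - pi"] t0(3) by simp
    then show ?thesis using that[of "t0 - pi"] t0 False d e pi_gt3 by auto
  qed
  define L where "L = max (-\<epsilon>) (-tn)"
  define R where "R = min \<epsilon> (T - tn)"
  have pe: "2 * \<epsilon> < pi" using e pi_gt3 by linarith
  have RL: "R - L \<ge> \<delta>/2" unfolding L_def R_def
    by (rule minmax) (use tn d pe in \<open>simp_all add: T_def\<close>)
  have LR: "-\<epsilon> \<le> L" "-tn \<le> L" "R \<le> \<epsilon>" "R \<le> T - tn" unfolding L_def R_def by auto
  define s1 where "s1 = L + \<delta>/8"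
  define s2 where "s2 = R - \<delta>/8"
  have "12 * pi / \<delta> > 0" using d by simp
  then have vpos: "v > 0" using v by linarith
  have vd: "v * \<delta> \<ge> 12 * pi" using v d by (simp add: pos_divide_le_eq)
  have "\<exists>t. 0 < t \<and> t < T \<and> x t \<in> omega v a \<epsilon> t"
  proof (rule window_hit[OF ray tn(1) e(1) _ _ _ _ _ _ a])
    show "\<epsilon> \<le> 1" using e by simp
    show "- \<epsilon> < s1" "s1 \<le> s2" "s2 < \<epsilon>" "0 < tn + s1" "tn + s2 < T"
      using RL LR d unfolding s1_def s2_def by linarith+
    fix c :: real assume c: "\<bar>c\<bar> \<le> 1"
    have "s2 - s1 \<ge> \<delta>/4" using RL unfolding s1_def s2_def by simp
    then have "v * (s2 - s1) \<ge> v * (\<delta>/4)" using vpos by (intro mult_left_mono) auto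
    then have "v * (s2 - s1) \<ge> 3 * pi" using vd by simp
    moreover have "arctan (c * tan s2) - arctan (c * tan s1) < pi"
      using arctan_ubound[of "c * tan s2"] arctan_lbound[of "c * tan s1"] by simp
    ultimately show "2 * pi - a < v * (s2 - s1) - (arctan (c * tan s2) - arctan (c * tan s1))"
      using a pi_gt_zero by linarith
  qed
  then show "\<exists>t>0. t < pi - 2*\<epsilon> + \<delta> \<and> x t \<in> omega v a \<epsilon> t" unfolding T_def by blast
qed

lemma gcc_small_v:
  assumes "0 < v" "2 * pi * v < a" "a < pi" "0 < \<epsilon>"
  shows "GCC v a \<epsilon> ((pi - a)/v + 6*pi)"
  by (rule gcc_from_arith[OF assms(4), where K="(pi - a)/v + 4*pi"])
     (use arith_small_v[OF assms(1-3)] pi_gt_zero in auto)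

lemma dense_gcc:
  fixes k h :: int
  assumes ep: "0 < \<epsilon>" and k: "0 < k"
    and eta: "\<eta> = of_int k * pi * (1 - v) - 2*pi * of_int h" "\<eta> \<noteq> 0" "\<bar>\<eta>\<bar> < a"
  shows "\<exists>T>0. GCC v a \<epsilon> T"
proof -
  define J where "J = nat \<lceil>2*pi/\<bar>\<eta>\<bar>\<rceil> + 1"
  define K where "K = real (nat k * J) * pi"
  have "GCC v a \<epsilon> (pi + K + 1)"
  proof (rule gcc_from_arith[OF ep, where K=K])
    show "pi + K < pi + K + 1" by simp
    fix C
    obtain j :: nat and m :: int where j: "j \<le> J" "0 < C + real j * \<eta> + 2*pi * of_int m"
      "C + real j * \<eta> + 2*pi * of_int m < a"
      using sweep[OF eta(2,3), of C] unfolding J_def by blast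
    have kj: "real (nat k * j) * pi \<le> K" unfolding K_def using j(1) k
      by (intro mult_right_mono) auto
    have eq: "C + real (nat k * j) * pi * (1 - v) + 2*pi * of_int (m - int j * h) = C + real j * \<eta> + 2*pi * of_int m"
      using k unfolding eta(1) by (simp add: algebra_simps)
    show "\<exists>k'::nat. real k' * pi \<le> K \<and> (\<exists>m::int. 0 < C + real k' * pi * (1 - v) + 2*pi * of_int m
                 \<and> C + real k' * pi * (1 - v) + 2*pi * of_int m < a)"
      using kj j eq by (intro exI[of _ "nat k * j"] conjI exI[of _ "m - int j * h"]) auto
  qed
  moreover have "pi + K + 1 > 0" unfolding K_def using pi_gt_zero by (simp add: add_pos_nonneg)
  ultimately show ?thesis by blast
qed

lemma T0_fin: "T > 0 \<Longrightarrow> GCC v a \<epsilon> T \<Longrightarrow> T0 v a \<epsilon> < \<infinity>"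
proof -
  assume "T > 0" "GCC v a \<epsilon> T"
  then have "T0 v a \<epsilon> \<le> ereal T" by (rule T0_le)
  then show ?thesis by (rule le_less_trans) simp
qed

lemma crit_finite:
  assumes a: "0 < a" "a < 2*pi" and e: "0 < \<epsilon>" "\<epsilon> < 1"
  shows "finite {v. v > 0 \<and> T0 v a \<epsilon> = \<infinity>}"
proof -
  define v1 where "v1 = (2*pi - a + 2*\<epsilon>) / (2*\<epsilon>)"
  have v1g: "v1 > 1" unfolding v1_def using a e by (simp add: field_simps)
  define N :: nat where "N = nat \<lceil>2*pi/a\<rceil> + 1"
  have N0: "N > 0" unfolding N_def by simp
  have "2*pi/a < real N" unfolding N_def by linarith
  then have Na: "2*pi / real N < a" using a N0 by (simp add: field_simps)
  define M :: int where "M = int N * \<lceil>v1\<rceil>"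
  define S :: "real set" where "S = {1 - 2 * of_int h / of_int k | k h. k \<in> {1..int N} \<and> h \<in> {-M..M}}"
  have "finite S" unfolding S_def by (rule finite_image_set2) auto
  moreover have "{v. v > 0 \<and> T0 v a \<epsilon> = \<infinity>} \<subseteq> S"
  proof
    fix v assume "v \<in> {v. v > 0 \<and> T0 v a \<epsilon> = \<infinity>}"
    then have v: "v > 0" "T0 v a \<epsilon> = \<infinity>" by auto
    have vv1: "v \<le> v1"
    proof (rule ccontr)
      assume "\<not> v \<le> v1"
      then have "GCC v a \<epsilon> (2*pi + 2)" using gcc_large[OF a e] unfolding v1_def by simp
      then have "T0 v a \<epsilon> < \<infinity>" by (rule T0_fin[rotated]) (simp add: add_pos_pos)
      then show False using v by simp
    qed
    obtain h k :: int where hk: "0 < k" "k \<le> int N" "\<bar>of_int k * ((1 - v)/2) - of_int h\<bar> < 1 / real N"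
      using Dirichlet_approx[OF N0, of "(1 - v)/2"] by metis
    define \<eta> where "\<eta> = of_int k * pi * (1 - v) - 2*pi * of_int h"
    have etaeq: "\<eta> = 2*pi * (of_int k * ((1 - v)/2) - of_int h)" unfolding \<eta>_def by (simp add: algebra_simps)
    have "\<bar>\<eta>\<bar> < 2*pi * (1 / real N)" unfolding etaeq abs_mult
      using mult_strict_left_mono[OF hk(3), of "2*pi"] by simp
    then have etaa: "\<bar>\<eta>\<bar> < a" using Na by simp
    have eta0: "\<eta> = 0"
    proof (rule ccontr)
      assume "\<eta> \<noteq> 0"
      then obtain T where "T > 0" "GCC v a \<epsilon> T" using dense_gcc[OF e(1) hk(1) \<eta>_def _ etaa] by blast
      then have "T0 v a \<epsilon> < \<infinity>" by (rule T0_fin)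
      then show False using v by simp
    qed
    then have "of_int k * ((1 - v)/2) - of_int h = 0" unfolding etaeq by simp
    then have kh: "of_int k * (1 - v) = 2 * of_int h" by (simp add: field_simps)
    have kpos: "(0::real) < of_int k" using hk(1) by simp
    have vform: "v = 1 - 2 * of_int h / of_int k" using kh kpos by (simp add: field_simps)
    have "of_int k * v > 0" using kpos v by simp
    moreover have "of_int k * (1 - v) = of_int k - of_int k * v" by (simp add: algebra_simps)
    ultimately have "of_int (2 * h) < (of_int k :: real)" using kh by simp
    then have "2 * h < k" by (simp only: of_int_less_iff)
    moreover have "1 \<le> \<lceil>v1\<rceil>" using v1g by simp
    then have "int N * 1 \<le> M" unfolding M_def by (intro mult_left_mono) auto
    ultimately have h1: "h \<le> M" using hk(2) by linarith
    have "of_int k * (1 - v1) \<le> of_int k * (1 - v)" using vv1 kpos by simp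
    then have "of_int k * (1 - v1) \<le> 2 * of_int h" using kh by simp
    moreover have "- (real N * v1) \<le> of_int k * (1 - v1)"
    proof -
      have "of_int k * (1 - v1) = of_int k + of_int k * (- v1)" by (simp add: algebra_simps)
      then have "of_int k * (1 - v1) \<ge> of_int k * (- v1)" using kpos by linarith
      moreover have "of_int k * v1 \<le> real N * v1" using hk(2) v1g by (intro mult_right_mono) auto
      ultimately show ?thesis by linarith
    qed
    moreover have "real N * v1 \<le> of_int M" unfolding M_def using v1g by (simp add: mult_left_mono)
    ultimately have "- of_int M \<le> 2 * (of_int h :: real)" by linarith
    moreover have "(0::real) \<le> of_int M" unfolding M_def using v1g by simp
    ultimately have h2: "-M \<le> h" by linarith
    show "v \<in> S" unfolding S_def using hk(1,2) h1 h2 vform by (intro CollectI exI[of _ k] exI[of _ h]) auto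
  qed
  ultimately show ?thesis by (rule finite_subset[rotated])
qed

lemma lim_small:
  assumes a: "0 < a" "a < pi" and e: "0 < \<epsilon>" "\<epsilon> < 1"
  shows "((\<lambda>v. T0 v a \<epsilon> * ereal (v / (pi - a))) \<longlongrightarrow> 1) (at_right 0)"
proof -
  define F where "F v = T0 v a \<epsilon> * ereal (v / (pi - a))" for v
  have pa: "pi - a > 0" using a by simp
  have ev: "eventually (\<lambda>v. v \<in> {0<..<a/(2*pi)}) (at_right 0)"
    using a by (intro eventually_at_right_real) simp
  have lo: "eventually (\<lambda>v. ereal 1 \<le> F v) (at_right 0)"
    using ev
  proof (rule eventually_mono)
    fix v assume v: "v \<in> {0<..<a/(2*pi)}"
    have "ereal ((pi - a)/v) \<le> T0 v a \<epsilon>"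
      by (rule T0_ge) (use lower_small_v[of v a \<epsilon>] v a e in auto)
    then have "ereal ((pi - a)/v) * ereal (v / (pi - a)) \<le> F v"
      unfolding F_def by (rule ereal_mult_right_mono) (use v pa in simp)
    moreover have "(pi - a)/v * (v / (pi - a)) = 1" using v pa by simp
    ultimately show "ereal 1 \<le> F v" by simp
  qed
  have hi: "eventually (\<lambda>v. F v \<le> ereal (1 + 6 * pi * v/(pi - a))) (at_right 0)"
    using ev
  proof (rule eventually_mono)
    fix v assume v: "v \<in> {0<..<a/(2*pi)}"
    have v2: "2 * pi * v < a" using v by (simp add: field_simps)
    have T: "(pi - a)/v + 6*pi > 0" using v pa by (simp add: add_pos_pos)
    have "T0 v a \<epsilon> \<le> ereal ((pi - a)/v + 6*pi)"
      by (rule T0_le[OF T gcc_small_v]) (use v v2 a e in auto)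
    then have "F v \<le> ereal ((pi - a)/v + 6*pi) * ereal (v / (pi - a))"
      unfolding F_def by (rule ereal_mult_right_mono) (use v pa in simp)
    moreover have "((pi - a)/v + 6*pi) * (v / (pi - a)) = 1 + 6 * pi * v/(pi - a)" using v pa by (simp add: field_simps)
    ultimately show "F v \<le> ereal (1 + 6 * pi * v/(pi - a))" by simp
  qed
  have "((\<lambda>v. 1 + 6 * pi * v/(pi - a)) \<longlongrightarrow> 1 + 6 * pi * 0/(pi - a)) (at_right 0)"
    by (intro tendsto_intros) (use pa in simp)
  then have lim: "((\<lambda>v. ereal (1 + 6 * pi * v/(pi - a))) \<longlongrightarrow> ereal 1) (at_right 0)" by simp
  have "(F \<longlongrightarrow> ereal 1) (at_right 0)"
    by (rule tendsto_sandwich[OF lo hi _ lim]) simp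
  then show ?thesis unfolding F_def by (simp add: one_ereal_def)
qed

lemma lim_top:
  assumes a: "0 < a" and e: "0 < \<epsilon>" "\<epsilon> < 1"
  shows "((\<lambda>v. T0 v a \<epsilon>) \<longlongrightarrow> ereal (pi - 2 * \<epsilon>)) at_top"
proof (rule order_tendstoI)
  have lb: "ereal (pi - 2*\<epsilon>) \<le> T0 v a \<epsilon>" for v
    by (rule T0_ge) (use lower_top[of \<epsilon> v a] e in auto)
  fix y assume "y < ereal (pi - 2 * \<epsilon>)"
  then show "eventually (\<lambda>v. y < T0 v a \<epsilon>) at_top"
    using lb by (intro always_eventually allI) (metis less_le_trans)
next
  fix y assume "ereal (pi - 2 * \<epsilon>) < y"
  then obtain z where z: "ereal (pi - 2*\<epsilon>) < ereal z" "ereal z < y" using ereal_dense2 by blast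
  define \<delta> where "\<delta> = min \<epsilon> ((z - (pi - 2*\<epsilon>))/2)"
  have zz: "pi - 2*\<epsilon> < z" using z(1) by simp
  have "\<delta> \<le> (z - (pi - 2*\<epsilon>))/2" unfolding \<delta>_def by (rule min.cobounded2)
  then have d: "0 < \<delta>" "\<delta> \<le> \<epsilon>" "pi - 2*\<epsilon> + \<delta> < z" using zz e unfolding \<delta>_def by auto
  have pe: "2*\<epsilon> < pi" using e pi_gt3 by linarith
  show "eventually (\<lambda>v. T0 v a \<epsilon> < y) at_top"
    using eventually_ge_at_top[of "12 * pi / \<delta>"]
  proof (rule eventually_mono)
    fix v assume v: "12 * pi / \<delta> \<le> v"
    have "T0 v a \<epsilon> \<le> ereal (pi - 2*\<epsilon> + \<delta>)"
      by (rule T0_le[OF _ gcc_top[OF a e d(1,2) v]]) (use pe d in simp)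
    also have "\<dots> < ereal z" using d by simp
    also have "\<dots> < y" by (rule z(2))
    finally show "T0 v a \<epsilon> < y" .
  qed
qed

theorem proposition3p1:
  fixes a \<epsilon> :: real
  assumes "0 < a" "a < 2 * pi" "0 < \<epsilon>" "\<epsilon> < 1"
  shows "finite {v. v > 0 \<and> T0 v a \<epsilon> = \<infinity>}
    \<and> (a < pi \<longrightarrow> ((\<lambda>v. T0 v a \<epsilon> * ereal (v / (pi - a))) \<longlongrightarrow> 1) (at_right 0))
    \<and> (\<forall>v. v > (2 * pi - a + 2 * \<epsilon>) / (2 * \<epsilon>) \<longrightarrow> T0 v a \<epsilon> < \<infinity>)
    \<and> ((\<lambda>v. T0 v a \<epsilon>) \<longlongrightarrow> ereal (pi - 2 * \<epsilon>)) at_top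
    \<and> (\<forall>v. v \<in> \<rat> \<and> v > 0 \<longrightarrow>
         (\<exists>a0 > 0. \<exists>\<epsilon>0 > 0. \<forall>a' \<epsilon>'. 0 < a' \<and> a' < a0 \<and> 0 < \<epsilon>' \<and> \<epsilon>' < \<epsilon>0
              \<longrightarrow> T0 v a' \<epsilon>' = \<infinity>))"
proof (intro conjI impI allI)
  show "finite {v. v > 0 \<and> T0 v a \<epsilon> = \<infinity>}" by (rule crit_finite) (use assms in auto)
  show "a < pi \<Longrightarrow> ((\<lambda>v. T0 v a \<epsilon> * ereal (v / (pi - a))) \<longlongrightarrow> 1) (at_right 0)"
    by (rule lim_small) (use assms in auto)
  show "((\<lambda>v. T0 v a \<epsilon>) \<longlongrightarrow> ereal (pi - 2 * \<epsilon>)) at_top"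
    by (rule lim_top) (use assms in auto)
next
  fix v assume v: "(2 * pi - a + 2 * \<epsilon>) / (2 * \<epsilon>) < v"
  have "GCC v a \<epsilon> (2*pi + 2)" by (rule gcc_large) (use assms v in auto)
  then show "T0 v a \<epsilon> < \<infinity>" by (rule T0_fin[rotated]) (simp add: add_pos_pos)
next
  fix v :: real assume "v \<in> \<rat> \<and> v > 0"
  then show "\<exists>a0 > 0. \<exists>\<epsilon>0 > 0. \<forall>a' \<epsilon>'. 0 < a' \<and> a' < a0 \<and> 0 < \<epsilon>' \<and> \<epsilon>' < \<epsilon>0
              \<longrightarrow> T0 v a' \<epsilon>' = \<infinity>" using claim_rat by blast
qed

end
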